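(* In the virtually-$\mathbb{Z}$ setting described in the context, for every $s\in G$ the quantity $\mathrm{imp}_k(s)=\max\{|p(gs)-p(g)| : g\in V_{\{k\}}\}$ does not depend on $k\in\mathbb{Z}$.
   Context: $G$ is a finitely generated group, $H\leq G$ a subgroup of finite index and $\varphi:H\to\mathbb{Z}$ a group isomorphism. $F\subseteq G$ is a finite set with $1_G\in F$ containing exactly one element of each right coset $Hg$, so every $g\in G$ decomposes uniquely as $g=zf$ with $z\in H$, $f\in F$. Define $p:G\to\mathbb{Z}$ by $p(zf)=\varphi(z)$. For $k\in\mathbb{Z}$, the $k$-th vertebra is $V_{\{k\}}=p^{-1}(\{k\})$ (a finite set). *)

theory Defs
  imports "HOL-Algebra.Algebra"
begin

definition fin_gen_group :: "('a, 'b) monoid_scheme \<Rightarrow> bool" where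
  "fin_gen_group G \<longleftrightarrow> (\<exists>S. finite S \<and> S \<subseteq> carrier G \<and> generate G S = carrier G)"

definition right_transversal :: "('a, 'b) monoid_scheme \<Rightarrow> 'a set \<Rightarrow> 'a set \<Rightarrow> bool" where
  "right_transversal G H F \<longleftrightarrow> F \<subseteq> carrier G \<and>
     (\<forall>C \<in> rcosets\<^bsub>G\<^esub> H. \<exists>!f. f \<in> F \<and> f \<in> C)"

definition vz_p :: "('a, 'b) monoid_scheme \<Rightarrow> 'a set \<Rightarrow> ('a \<Rightarrow> int) \<Rightarrow> 'a set \<Rightarrow> 'a \<Rightarrow> int" where
  "vz_p G H \<phi> F g = \<phi> (THE z. z \<in> H \<and> (\<exists>f\<in>F. g = z \<otimes>\<^bsub>G\<^esub> f))"

definition vertebra :: "('a, 'b) monoid_scheme \<Rightarrow> 'a set \<Rightarrow> ('a \<Rightarrow> int) \<Rightarrow> 'a set \<Rightarrow> int \<Rightarrow> 'a set" where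
  "vertebra G H \<phi> F k = {g \<in> carrier G. vz_p G H \<phi> F g = k}"

definition imp :: "('a, 'b) monoid_scheme \<Rightarrow> 'a set \<Rightarrow> ('a \<Rightarrow> int) \<Rightarrow> 'a set \<Rightarrow> int \<Rightarrow> 'a \<Rightarrow> int" where
  "imp G H \<phi> F k s = Max {\<bar>vz_p G H \<phi> F (g \<otimes>\<^bsub>G\<^esub> s) - vz_p G H \<phi> F g\<bar> | g. g \<in> vertebra G H \<phi> F k}"

end

theory Submission
  imports Defs
begin

lemma decomp_ex:
  fixes G :: "('a, 'b) monoid_scheme" (structure)
  assumes "group G" "subgroup H G" "right_transversal G H F" "g \<in> carrier G"
  shows "\<exists>z f. z \<in> H \<and> f \<in> F \<and> g = z \<otimes>\<^bsub>G\<^esub> f"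
proof -
  interpret group G by fact
  have FC: "F \<subseteq> carrier G" using assms(3) unfolding right_transversal_def by blast
  have "H #>\<^bsub>G\<^esub> g \<in> rcosets\<^bsub>G\<^esub> H" using assms(4) unfolding RCOSETS_def by blast
  then obtain f where f: "f \<in> F" "f \<in> H #>\<^bsub>G\<^esub> g"
    using assms(3) unfolding right_transversal_def by blast
  then obtain z' where z': "z' \<in> H" "f = z' \<otimes> g" unfolding r_coset_def by blast
  have z'c: "z' \<in> carrier G" using z' assms(2) subgroup.subset by blast
  have "inv z' \<in> H" using subgroup.m_inv_closed[OF assms(2) z'(1)] .
  moreover have "g = inv z' \<otimes> f" using inv_solve_left[OF assms(4) z'c] z'(2) z'c assms(4)
    by simp
  ultimately show ?thesis using f by blast
qed

lemma decomp_uniq: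
  fixes G :: "('a, 'b) monoid_scheme" (structure)
  assumes "group G" "subgroup H G" "right_transversal G H F"
    and "z1 \<in> H" "f1 \<in> F" "z2 \<in> H" "f2 \<in> F" "z1 \<otimes>\<^bsub>G\<^esub> f1 = z2 \<otimes>\<^bsub>G\<^esub> f2"
  shows "z1 = z2"
proof -
  interpret group G by fact
  have FC: "F \<subseteq> carrier G" using assms(3) unfolding right_transversal_def by blast
  have HC: "H \<subseteq> carrier G" using assms(2) subgroup.subset by blast
  have c: "z1 \<in> carrier G" "z2 \<in> carrier G" "f1 \<in> carrier G" "f2 \<in> carrier G"
    using assms FC HC by auto
  have "f1 = inv z1 \<otimes> (z2 \<otimes> f2)" using inv_solve_left[OF c(3) c(1), of "z2 \<otimes> f2"] assms(8) c
    by simp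
  also have "\<dots> = inv z1 \<otimes> z2 \<otimes> f2" using c by (simp add: m_assoc)
  finally have "f1 = inv z1 \<otimes> z2 \<otimes> f2" .
  moreover have "inv z1 \<otimes> z2 \<in> H" using subgroup.m_closed[OF assms(2) subgroup.m_inv_closed[OF assms(2,4)] assms(6)] .
  ultimately have f1in: "f1 \<in> H #>\<^bsub>G\<^esub> f2" unfolding r_coset_def by blast
  have f2in: "f2 \<in> H #>\<^bsub>G\<^esub> f2" using assms(2) c(4) by (simp add: rcos_self)
  have "H #>\<^bsub>G\<^esub> f2 \<in> rcosets\<^bsub>G\<^esub> H" using c(4) unfolding RCOSETS_def by blast
  then have "f1 = f2" using assms(3,5,7) f1in f2in unfolding right_transversal_def by blast
  then show ?thesis using assms(8) c by simp
qed

lemma vz_p_eq: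
  fixes G :: "('a, 'b) monoid_scheme" (structure)
  assumes "group G" "subgroup H G" "right_transversal G H F"
    and "z \<in> H" "f \<in> F"
  shows "vz_p G H \<phi> F (z \<otimes>\<^bsub>G\<^esub> f) = \<phi> z"
proof -
  have "(THE z'. z' \<in> H \<and> (\<exists>f'\<in>F. z \<otimes>\<^bsub>G\<^esub> f = z' \<otimes>\<^bsub>G\<^esub> f')) = z"
    apply (rule the_equality)
    using assms apply blast
    using decomp_uniq[OF assms(1,2,3)] assms(4,5) by blast
  then show ?thesis unfolding vz_p_def by simp
qed

lemma vz_p_shift:
  fixes G :: "('a, 'b) monoid_scheme" (structure)
  assumes "group G" "subgroup H G" "right_transversal G H F"
    and hom: "\<And>x y. x \<in> H \<Longrightarrow> y \<in> H \<Longrightarrow> \<phi> (x \<otimes>\<^bsub>G\<^esub> y) = \<phi> x + \<phi> y"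
    and "m \<in> H" "g \<in> carrier G"
  shows "vz_p G H \<phi> F (m \<otimes>\<^bsub>G\<^esub> g) = \<phi> m + vz_p G H \<phi> F g"
proof -
  interpret group G by fact
  have FC: "F \<subseteq> carrier G" using assms(3) unfolding right_transversal_def by blast
  have HC: "H \<subseteq> carrier G" using assms(2) subgroup.subset by blast
  obtain z f where zf: "z \<in> H" "f \<in> F" "g = z \<otimes> f" using decomp_ex[OF assms(1,2,3,6)] by blast
  have "m \<otimes> g = (m \<otimes> z) \<otimes> f" using zf assms FC HC by (simp add: m_assoc subsetD)
  moreover have "m \<otimes> z \<in> H" using assms(2,5) zf subgroup.m_closed by metis
  ultimately have "vz_p G H \<phi> F (m \<otimes> g) = \<phi> (m \<otimes> z)"
    using vz_p_eq[OF assms(1,2,3) _ zf(2)] by simp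
  also have "\<dots> = \<phi> m + \<phi> z" using hom assms zf by blast
  also have "\<phi> z = vz_p G H \<phi> F g" using vz_p_eq[OF assms(1,2,3) zf(1,2)] zf(3) by simp
  finally show ?thesis .
qed

theorem proposition3:
  fixes G :: "('a, 'b) monoid_scheme" and H :: "'a set" and \<phi> :: "'a \<Rightarrow> int" and F :: "'a set"
  assumes "group G"
    and "fin_gen_group G"
    and "subgroup H G"
    and "finite (rcosets\<^bsub>G\<^esub> H)"
    and "\<phi> \<in> iso (G\<lparr>carrier := H\<rparr>) integer_group"
    and "finite F"
    and "\<one>\<^bsub>G\<^esub> \<in> F"
    and "right_transversal G H F"
    and "s \<in> carrier G"
  shows "imp G H \<phi> F k s = imp G H \<phi> F l s"
proof -
  interpret group G by fact
  have HC: "H \<subseteq> carrier G" using assms(3) subgroup.subset by blast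
  have hom: "\<And>x y. x \<in> H \<Longrightarrow> y \<in> H \<Longrightarrow> \<phi> (x \<otimes>\<^bsub>G\<^esub> y) = \<phi> x + \<phi> y"
    using assms(5) unfolding iso_def hom_def integer_group_def by auto
  have surj: "\<And>n. \<exists>a\<in>H. \<phi> a = n"
  proof -
    fix n :: int
    have "\<phi> ` H = UNIV"
      using assms(5) unfolding iso_def bij_betw_def integer_group_def by auto
    then have "n \<in> \<phi> ` H" by simp
    then show "\<exists>a\<in>H. \<phi> a = n" by (metis imageE)
  qed
  define S where "S = (\<lambda>k. {\<bar>vz_p G H \<phi> F (g \<otimes>\<^bsub>G\<^esub> s) - vz_p G H \<phi> F g\<bar> | g. g \<in> vertebra G H \<phi> F k})"
  have sub: "S k1 \<subseteq> S k2" for k1 k2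
  proof
    fix x assume "x \<in> S k1"
    then obtain g where g: "g \<in> carrier G" "vz_p G H \<phi> F g = k1"
      "x = \<bar>vz_p G H \<phi> F (g \<otimes>\<^bsub>G\<^esub> s) - vz_p G H \<phi> F g\<bar>"
      unfolding S_def vertebra_def by blast
    obtain a where a: "a \<in> H" "\<phi> a = k2 - k1" using surj by blast
    have ac: "a \<in> carrier G" using a HC by blast
    have p1: "vz_p G H \<phi> F (a \<otimes>\<^bsub>G\<^esub> g) = \<phi> a + vz_p G H \<phi> F g"
      using vz_p_shift[OF assms(1,3,8) hom a(1) g(1)] .
    have p2: "vz_p G H \<phi> F (a \<otimes>\<^bsub>G\<^esub> g \<otimes>\<^bsub>G\<^esub> s) = \<phi> a + vz_p G H \<phi> F (g \<otimes>\<^bsub>G\<^esub> s)"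
      using vz_p_shift[OF assms(1,3,8) hom a(1)] g(1) assms(9) ac by (simp add: m_assoc)
    have "a \<otimes>\<^bsub>G\<^esub> g \<in> vertebra G H \<phi> F k2" unfolding vertebra_def using p1 a g ac by simp
    moreover have "x = \<bar>vz_p G H \<phi> F (a \<otimes>\<^bsub>G\<^esub> g \<otimes>\<^bsub>G\<^esub> s) - vz_p G H \<phi> F (a \<otimes>\<^bsub>G\<^esub> g)\<bar>"
      using p1 p2 g(3) by simp
    ultimately show "x \<in> S k2" unfolding S_def by blast
  qed
  have "S k = S l" using sub by (simp add: subset_antisym)
  then show ?thesis unfolding imp_def S_def by simp
qed

end
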